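(* Let $\mathcal{X}=\{x_1,\dots,x_N\}$, $\Theta=\{\theta_1,\dots,\theta_M\}$, $\mathcal{A}$ finite with $|\mathcal{A}|=K$, utilities $v_D,v_U:\mathcal{X}\times\Theta\times\mathcal{A}\to\mathbb{R}$, beliefs $b_D(\cdot|x)\in\Delta\Theta$ for $x\in\mathcal{X}$, a common prior $\mathbf p^0\in\Delta\mathcal{X}$, and the signal set $\mathcal{S}=\{s_{\{a^1,\dots,a^M\}}:a^l\in\mathcal{A}\}$ with $K^M$ elements. Call a generator $\pi:\mathcal{X}\to\Delta\mathcal{S}$ credible if $\sum_{x\in\mathcal{X}}[v_U(x,\theta_l,a^l)-v_U(x,\theta_l,a^h)]\pi(s_{\{a^1,\dots,a^M\}}|x)\mathbf p^0(x)\ge0$ for all $s_{\{a^1,\dots,a^M\}}\in\mathcal{S}$, $a^h\in\mathcal{A}$, $l\in\{1,\dots,M\}$, and let $$\bar v_D(\pi,\mathbf p^0)=\sum_{x}\mathbf p^0(x)\sum_{s_{\{a^1,\dots,a^M\}}\in\mathcal{S}}\pi(s_{\{a^1,\dots,a^M\}}|x)\sum_{l=1}^M b_D(\theta_l|x)v_D(x,\theta_l,a^l).$$ Call a credible generator optimal if it maximizes $\bar v_D(\cdot,\mathbf p^0)$ over all credible generators, and let $V_D(\mathbf p^0)$ be this maximum. Then the set of optimal generators consists of either exactly one or infinitely many generators, all achieving $V_D(\mathbf p^0)$. Moreover, there exists an optimal generator $\pi^*$ such that, for each state $x\in\mathcal{X}$, $\pi^*(s|x)=0$ for at least $K^M-N$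 signals $s\in\mathcal{S}$.
   Context: This is the benchmark case of a defender–user game: the defender cannot modulate utilities (no utility transfer) and both the defender and every user type hold the same prior $\mathbf p^0$ over the state. A signal $s_{\{a^1,\dots,a^M\}}$ is a security policy prescribing action $a^l$ to type $\theta_l$; credibility means every prescribed action is a best response of that type under the Bayesian posterior. *)

theory Defs
  imports Complex_Main
begin

text \<open>States 'x (the finite set X, N = CARD('x)), user types 'th (M = CARD('th)),
actions 'a (K = CARD('a)). A signal s_{a^1,...,a^M} is an action profile
s :: 'th => 'a prescribing action s theta to type theta; there are K^M of them.\<close>

definition is_dist :: "('b::finite \<Rightarrow> real) \<Rightarrow> bool" where
  "is_dist p \<longleftrightarrow> (\<forall>y. 0 \<le> p y) \<and> (\<Sum>y\<in>UNIV. p y) = 1"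

definition generator :: "('x::finite \<Rightarrow> ('th::finite \<Rightarrow> 'a::finite) \<Rightarrow> real) \<Rightarrow> bool" where
  "generator \<pi> \<longleftrightarrow> (\<forall>x. is_dist (\<pi> x))"

definition credible ::
  "('x::finite \<Rightarrow> 'th::finite \<Rightarrow> 'a::finite \<Rightarrow> real) \<Rightarrow> ('x \<Rightarrow> real)
    \<Rightarrow> ('x \<Rightarrow> ('th \<Rightarrow> 'a) \<Rightarrow> real) \<Rightarrow> bool" where
  "credible vU p0 \<pi> \<longleftrightarrow> generator \<pi> \<and>
     (\<forall>s ah l. (\<Sum>x\<in>UNIV. (vU x l (s l) - vU x l ah) * \<pi> x s * p0 x) \<ge> 0)"

definition vbarD ::
  "('x::finite \<Rightarrow> 'th::finite \<Rightarrow> 'a::finite \<Rightarrow> real) \<Rightarrow> ('x \<Rightarrow> 'th \<Rightarrow> real) \<Rightarrow> ('x \<Rightarrow> real)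
    \<Rightarrow> ('x \<Rightarrow> ('th \<Rightarrow> 'a) \<Rightarrow> real) \<Rightarrow> real" where
  "vbarD vD bD p0 \<pi> = (\<Sum>x\<in>UNIV. p0 x * (\<Sum>s\<in>UNIV. \<pi> x s * (\<Sum>l\<in>UNIV. bD x l * vD x l (s l))))"

definition optimal where
  "optimal vD vU bD p0 \<pi> \<longleftrightarrow> credible vU p0 \<pi> \<and>
     (\<forall>\<pi>'. credible vU p0 \<pi>' \<longrightarrow> vbarD vD bD p0 \<pi>' \<le> vbarD vD bD p0 \<pi>)"

definition VD where
  "VD vD vU bD p0 = (SUP \<pi>\<in>{\<pi>. credible vU p0 \<pi>}. vbarD vD bD p0 \<pi>)"

end

theory Submission
  imports Defs "HOL-Analysis.Analysis"
begin

lemma gen_bounds: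
  assumes "generator \<pi>"
  shows "0 \<le> \<pi> x s \<and> \<pi> x s \<le> 1"
proof -
  have d: "is_dist (\<pi> x)" using assms unfolding generator_def by blast
  hence nn: "\<forall>y. 0 \<le> \<pi> x y" and s1: "(\<Sum>y\<in>UNIV. \<pi> x y) = 1" unfolding is_dist_def by auto
  have "\<pi> x s \<le> (\<Sum>y\<in>UNIV. \<pi> x y)"
    by (rule member_le_sum) (use nn in auto)
  with nn s1 show ?thesis by auto
qed

lemma cont_eval [continuous_intros]:
  "continuous_on S (\<lambda>\<pi>::'x \<Rightarrow> 'b \<Rightarrow> real. \<pi> x s)"
proof -
  have a: "continuous_on UNIV (\<lambda>\<pi>::'x \<Rightarrow> 'b \<Rightarrow> real. \<pi> x)" by simp
  have b: "continuous_on UNIV (\<lambda>f::'b \<Rightarrow> real. f s)" by simp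
  have "continuous_on UNIV ((\<lambda>f::'b \<Rightarrow> real. f s) \<circ> (\<lambda>\<pi>::'x \<Rightarrow> 'b \<Rightarrow> real. \<pi> x))"
    by (rule continuous_on_compose[OF a continuous_on_subset[OF b]]) simp
  then show ?thesis by (auto simp: o_def intro: continuous_on_subset)
qed

lemma compact_credible:
  fixes vU :: "'x::finite \<Rightarrow> 'th::finite \<Rightarrow> 'a::finite \<Rightarrow> real"
  shows "compact {\<pi>. credible vU p0 \<pi>}"
proof -
  define B :: "('x \<Rightarrow> ('th \<Rightarrow> 'a) \<Rightarrow> real) set"
    where "B = PiE UNIV (\<lambda>_. PiE UNIV (\<lambda>_. {0..1::real}))"
  have c1: "compactin euclidean (PiE (UNIV::('th \<Rightarrow> 'a) set) (\<lambda>_. {0..1::real}))"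
    unfolding euclidean_product_topology[symmetric] compactin_PiE
    by (simp add: compactin_euclidean_iff)
  have "compactin euclidean B"
    unfolding B_def euclidean_product_topology[symmetric] compactin_PiE
    using c1 by (simp add: euclidean_product_topology)
  hence cB: "compact B" by (simp add: compactin_euclidean_iff)
  define Cl :: "('x \<Rightarrow> ('th \<Rightarrow> 'a) \<Rightarrow> real) set" where
    "Cl = {\<pi>. \<forall>x. (\<Sum>s\<in>UNIV. \<pi> x s) = 1} \<inter> {\<pi>. \<forall>x s. 0 \<le> \<pi> x s} \<inter>
          {\<pi>. \<forall>s ah l. 0 \<le> (\<Sum>x\<in>UNIV. (vU x l (s l) - vU x l ah) * \<pi> x s * p0 x)}"
  have cCl: "closed Cl"
    unfolding Cl_def
    by (intro closed_Int closed_Collect_all closed_Collect_eq closed_Collect_le continuous_intros)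
  have eq: "{\<pi>. credible vU p0 \<pi>} = Cl"
    unfolding Cl_def credible_def generator_def is_dist_def by auto
  have sub: "Cl \<subseteq> B"
  proof
    fix \<pi> assume "\<pi> \<in> Cl"
    hence "generator \<pi>" using eq by (auto simp: credible_def)
    thus "\<pi> \<in> B" unfolding B_def using gen_bounds[OF \<open>generator \<pi>\<close>] by (auto simp: PiE_UNIV_domain)
  qed
  have "compact (B \<inter> Cl)" using cB cCl by (rule compact_Int_closed)
  moreover have "B \<inter> Cl = Cl" using sub by auto
  ultimately show ?thesis using eq by simp
qed

lemma cont_vbarD: "continuous_on S (vbarD vD bD p0)"
  unfolding vbarD_def by (intro continuous_intros)

lemma credible_nonempty:
  fixes vU :: "'x::finite \<Rightarrow> 'th::finite \<Rightarrow> 'a::finite \<Rightarrow> real"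
  shows "\<exists>\<pi>. credible vU p0 \<pi>"
proof -
  define f where "f l a = (\<Sum>x\<in>UNIV. p0 x * vU x l a)" for l a
  have "\<exists>a. \<forall>b. f l b \<le> f l a" for l
  proof -
    have "Max (range (f l)) \<in> range (f l)" by (intro Max_in) auto
    then obtain a where "f l a = Max (range (f l))" by (metis imageE)
    hence "\<forall>b. f l b \<le> f l a" by (simp add: Max_ge)
    thus ?thesis by blast
  qed
  then obtain ss where ss: "\<And>l b. f l b \<le> f l (ss l)" by metis
  define \<pi> :: "'x \<Rightarrow> ('th \<Rightarrow> 'a) \<Rightarrow> real" where "\<pi> x s = (if s = ss then 1 else 0)" for x s
  have "generator \<pi>" unfolding generator_def is_dist_def \<pi>_def by simp
  moreover have "(\<Sum>x\<in>UNIV. (vU x l (s l) - vU x l ah) * \<pi> x s * p0 x) \<ge> 0" for s ah l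
  proof (cases "s = ss")
    case True
    have "(\<Sum>x\<in>UNIV. (vU x l (s l) - vU x l ah) * \<pi> x s * p0 x) = f l (ss l) - f l ah"
      unfolding f_def \<pi>_def True by (simp add: sum_subtractf[symmetric] algebra_simps)
    then show ?thesis using ss[of l ah] by simp
  next
    case False
    then show ?thesis by (simp add: \<pi>_def)
  qed
  ultimately show ?thesis unfolding credible_def by blast
qed

lemma optimal_exists:
  fixes vU vD :: "'x::finite \<Rightarrow> 'th::finite \<Rightarrow> 'a::finite \<Rightarrow> real"
  shows "\<exists>\<pi>. optimal vD vU bD p0 \<pi>"
proof -
  have "\<exists>\<pi>\<in>{\<pi>. credible vU p0 \<pi>}. \<forall>\<pi>'\<in>{\<pi>. credible vU p0 \<pi>}. vbarD vD bD p0 \<pi>' \<le> vbarD vD bD p0 \<pi>"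
    by (rule continuous_attains_sup) (use compact_credible credible_nonempty cont_vbarD in auto)
  thus ?thesis unfolding optimal_def by auto
qed

lemma vbarD_lin:
  "vbarD vD bD p0 (\<lambda>x s. a * \<pi>1 x s + b * \<pi>2 x s) = a * vbarD vD bD p0 \<pi>1 + b * vbarD vD bD p0 \<pi>2"
  unfolding vbarD_def
  by (simp add: algebra_simps sum.distrib sum_distrib_left)

lemma vbarD_pert:
  "vbarD vD bD p0 (\<lambda>x s. (1 + t * c s) * \<pi> x s) = vbarD vD bD p0 \<pi> + t * vbarD vD bD p0 (\<lambda>x s. c s * \<pi> x s)"
  unfolding vbarD_def
  by (simp add: algebra_simps sum.distrib sum_distrib_left)

lemma credible_pert:
  assumes "credible vU p0 \<pi>" "\<And>x. (\<Sum>s\<in>UNIV. c s * \<pi> x s) = 0" "\<And>s. 0 \<le> 1 + c s"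
  shows "credible vU p0 (\<lambda>x s. (1 + c s) * \<pi> x s)"
proof -
  have g: "generator \<pi>" and cr: "\<And>s ah l. (\<Sum>x\<in>UNIV. (vU x l (s l) - vU x l ah) * \<pi> x s * p0 x) \<ge> 0"
    using assms(1) unfolding credible_def by auto
  have "is_dist (\<lambda>s. (1 + c s) * \<pi> x s)" for x
  proof -
    have "(\<Sum>s\<in>UNIV. (1 + c s) * \<pi> x s) = (\<Sum>s\<in>UNIV. \<pi> x s) + (\<Sum>s\<in>UNIV. c s * \<pi> x s)"
      by (simp add: algebra_simps sum.distrib)
    also have "\<dots> = 1" using g assms(2) unfolding generator_def is_dist_def by simp
    finally show ?thesis unfolding is_dist_def using gen_bounds[OF g] assms(3) by simp
  qed
  moreover have "(\<Sum>x\<in>UNIV. (vU x l (s l) - vU x l ah) * ((1 + c s) * \<pi> x s) * p0 x) \<ge> 0" for s ah l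
  proof -
    have "(\<Sum>x\<in>UNIV. (vU x l (s l) - vU x l ah) * ((1 + c s) * \<pi> x s) * p0 x)
        = (1 + c s) * (\<Sum>x\<in>UNIV. (vU x l (s l) - vU x l ah) * \<pi> x s * p0 x)"
      by (simp add: sum_distrib_left ac_simps)
    thus ?thesis using cr assms(3) by simp
  qed
  ultimately show ?thesis unfolding credible_def generator_def by simp
qed

lemma credible_conv:
  assumes "credible vU p0 \<pi>1" "credible vU p0 \<pi>2" "0 \<le> t" "t \<le> 1"
  shows "credible vU p0 (\<lambda>x s. (1 - t) * \<pi>1 x s + t * \<pi>2 x s)"
proof -
  have g1: "generator \<pi>1" and cr1: "\<And>s ah l. (\<Sum>x\<in>UNIV. (vU x l (s l) - vU x l ah) * \<pi>1 x s * p0 x) \<ge> 0"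
    using assms(1) unfolding credible_def by auto
  have g2: "generator \<pi>2" and cr2: "\<And>s ah l. (\<Sum>x\<in>UNIV. (vU x l (s l) - vU x l ah) * \<pi>2 x s * p0 x) \<ge> 0"
    using assms(2) unfolding credible_def by auto
  have "is_dist (\<lambda>s. (1 - t) * \<pi>1 x s + t * \<pi>2 x s)" for x
  proof -
    have "(\<Sum>s\<in>UNIV. (1 - t) * \<pi>1 x s + t * \<pi>2 x s) = (1 - t) * (\<Sum>s\<in>UNIV. \<pi>1 x s) + t * (\<Sum>s\<in>UNIV. \<pi>2 x s)"
      by (simp add: sum.distrib sum_distrib_left)
    also have "\<dots> = 1" using g1 g2 unfolding generator_def is_dist_def by simp
    finally show ?thesis unfolding is_dist_def using gen_bounds[OF g1] gen_bounds[OF g2] assms(3,4) by simp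
  qed
  moreover have "(\<Sum>x\<in>UNIV. (vU x l (s l) - vU x l ah) * ((1 - t) * \<pi>1 x s + t * \<pi>2 x s) * p0 x) \<ge> 0" for s ah l
  proof -
    have "(\<Sum>x\<in>UNIV. (vU x l (s l) - vU x l ah) * ((1 - t) * \<pi>1 x s + t * \<pi>2 x s) * p0 x)
        = (1 - t) * (\<Sum>x\<in>UNIV. (vU x l (s l) - vU x l ah) * \<pi>1 x s * p0 x)
          + t * (\<Sum>x\<in>UNIV. (vU x l (s l) - vU x l ah) * \<pi>2 x s * p0 x)" (is "?L = ?R")
    proof -
      have "?L = (\<Sum>x\<in>UNIV. (1 - t) * ((vU x l (s l) - vU x l ah) * \<pi>1 x s * p0 x)
                 + t * ((vU x l (s l) - vU x l ah) * \<pi>2 x s * p0 x))"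
        by (rule sum.cong) (simp_all add: algebra_simps)
      also have "\<dots> = ?R" by (simp add: sum.distrib sum_distrib_left)
      finally show ?thesis .
    qed
    thus ?thesis using cr1[where s=s and ah=ah and l=l] cr2[where s=s and ah=ah and l=l] assms(3,4) by simp
  qed
  ultimately show ?thesis unfolding credible_def generator_def by simp
qed

lemma dep_lemma:
  fixes w :: "'b \<Rightarrow> real^'n"
  assumes "finite U" "card U > CARD('n)"
  shows "\<exists>c. (\<Sum>s\<in>U. c s *\<^sub>R w s) = 0 \<and> (\<exists>s\<in>U. c s \<noteq> 0)"
proof (cases "inj_on w U")
  case False
  then obtain a b where ab: "a \<in> U" "b \<in> U" "a \<noteq> b" "w a = w b" unfolding inj_on_def by blast
  define c where "c s = (if s = a then 1 else if s = b then -1 else (0::real))" for s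
  have "(\<Sum>s\<in>U. c s *\<^sub>R w s) = (\<Sum>s\<in>U. (if s = a then w a else 0) - (if s = b then w b else 0))"
    by (rule sum.cong) (use ab(3) in \<open>auto simp: c_def\<close>)
  also have "\<dots> = w a - w b" using assms(1) ab(1,2) by (simp add: sum_subtractf)
  also have "\<dots> = 0" using ab(4) by simp
  finally have "(\<Sum>s\<in>U. c s *\<^sub>R w s) = 0" .
  moreover have "c a \<noteq> 0" by (simp add: c_def)
  ultimately show ?thesis using ab(1) by blast
next
  case True
  have cw: "card (w ` U) = card U" using True by (rule card_image)
  have "\<not> independent (w ` U)"
  proof
    assume "independent (w ` U)"
    from independent_bound[OF this] have "card (w ` U) \<le> DIM(real^'n)" by simp
    with cw assms(2) show False by simp
  qed
  then obtain u where u: "\<exists>v\<in>w ` U. u v \<noteq> 0" "(\<Sum>v\<in>w ` U. u v *\<^sub>R v) = 0"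
    using dependent_finite[of "w ` U"] assms(1) by auto
  have "(\<Sum>s\<in>U. (u \<circ> w) s *\<^sub>R w s) = 0"
    using u(2) sum.reindex[OF True, of "\<lambda>v. u v *\<^sub>R v"] by (simp add: o_def)
  moreover obtain s where "s \<in> U" "(u \<circ> w) s \<noteq> 0" using u(1) by auto
  ultimately show ?thesis by blast
qed

lemma optimal_value:
  assumes "optimal vD vU bD p0 \<pi>"
  shows "vbarD vD bD p0 \<pi> = VD vD vU bD p0"
proof -
  have "Sup (vbarD vD bD p0 ` {\<pi>. credible vU p0 \<pi>}) = vbarD vD bD p0 \<pi>"
    by (rule cSup_eq_maximum) (use assms in \<open>auto simp: optimal_def\<close>)
  thus ?thesis unfolding VD_def by simp
qed

lemma optimal_unique_or_infinite:
  fixes vU vD :: "'x::finite \<Rightarrow> 'th::finite \<Rightarrow> 'a::finite \<Rightarrow> real"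
  shows "(\<exists>!\<pi>. optimal vD vU bD p0 \<pi>) \<or> infinite {\<pi>. optimal vD vU bD p0 \<pi>}"
proof (cases "\<exists>!\<pi>. optimal vD vU bD p0 \<pi>")
  case True then show ?thesis by simp
next
  case False
  obtain \<pi>0 where "optimal vD vU bD p0 \<pi>0" using optimal_exists by blast
  with False obtain \<pi>1 \<pi>2 where o1: "optimal vD vU bD p0 \<pi>1" and o2: "optimal vD vU bD p0 \<pi>2"
    and ne: "\<pi>1 \<noteq> \<pi>2" by blast
  then obtain x s where xs: "\<pi>1 x s \<noteq> \<pi>2 x s" by (metis ext)
  define g where "g t = (\<lambda>x s. (1 - t) * \<pi>1 x s + t * \<pi>2 x s)" for t :: real
  have eqv: "vbarD vD bD p0 \<pi>1 = vbarD vD bD p0 \<pi>2"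
    using o1 o2 unfolding optimal_def by (meson order_antisym)
  have "g ` {0..1} \<subseteq> {\<pi>. optimal vD vU bD p0 \<pi>}"
  proof
    fix \<pi> assume "\<pi> \<in> g ` {0..1}"
    then obtain t where t: "0 \<le> t" "t \<le> 1" "\<pi> = g t" by auto
    have cr: "credible vU p0 \<pi>" unfolding t(3) g_def
      by (rule credible_conv) (use o1 o2 t in \<open>auto simp: optimal_def\<close>)
    have "vbarD vD bD p0 \<pi> = (1 - t) * vbarD vD bD p0 \<pi>1 + t * vbarD vD bD p0 \<pi>2"
      unfolding t(3) g_def by (rule vbarD_lin)
    also have "\<dots> = vbarD vD bD p0 \<pi>1" using eqv by (simp add: algebra_simps)
    finally have "vbarD vD bD p0 \<pi> = vbarD vD bD p0 \<pi>1" .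
    with cr o1 show "\<pi> \<in> {\<pi>. optimal vD vU bD p0 \<pi>}" unfolding optimal_def by auto
  qed
  moreover have "inj_on g {0..1}"
  proof
    fix t t' assume "g t = g t'"
    hence "g t x s = g t' x s" by simp
    hence "(t - t') * (\<pi>2 x s - \<pi>1 x s) = 0" unfolding g_def by (simp add: algebra_simps)
    with xs show "t = t'" by simp
  qed
  moreover have "infinite {0..1::real}" by (simp add: infinite_Icc)
  ultimately have "infinite {\<pi>. optimal vD vU bD p0 \<pi>}"
    by (meson finite_imageD infinite_super)
  then show ?thesis by simp
qed

lemma sparse_optimal:
  fixes vU vD :: "'x::finite \<Rightarrow> 'th::finite \<Rightarrow> 'a::finite \<Rightarrow> real"
  shows "\<exists>\<pi>. optimal vD vU bD p0 \<pi> \<and>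
              (\<forall>x. card {s. \<pi> x s = 0} \<ge> card (UNIV :: ('th \<Rightarrow> 'a) set) - card (UNIV :: 'x set))"
proof -
  define supp :: "('x \<Rightarrow> ('th \<Rightarrow> 'a) \<Rightarrow> real) \<Rightarrow> ('th \<Rightarrow> 'a) set"
    where "supp \<pi> = {s. \<exists>x. \<pi> x s \<noteq> 0}" for \<pi>
  obtain \<pi>0 where "optimal vD vU bD p0 \<pi>0" using optimal_exists by blast
  then obtain \<pi> where opt: "optimal vD vU bD p0 \<pi>"
    and mini: "\<And>\<pi>'. optimal vD vU bD p0 \<pi>' \<Longrightarrow> card (supp \<pi>) \<le> card (supp \<pi>')"
    using ex_has_least_nat[of "optimal vD vU bD p0" \<pi>0 "\<lambda>\<pi>. card (supp \<pi>)"] by blast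
  have cr: "credible vU p0 \<pi>" using opt by (simp add: optimal_def)
  have bound: "card (supp \<pi>) \<le> CARD('x)"
  proof (rule ccontr)
    assume "\<not> ?thesis"
    hence big: "card (supp \<pi>) > CARD('x)" by simp
    define U where "U = supp \<pi>"
    define w :: "('th \<Rightarrow> 'a) \<Rightarrow> real^'x" where "w s = (\<chi> x. \<pi> x s)" for s
    obtain c0 where c0: "(\<Sum>s\<in>U. c0 s *\<^sub>R w s) = 0" and "\<exists>s\<in>U. c0 s \<noteq> 0"
      using dep_lemma[of U w] big unfolding U_def by auto
    then obtain s0 where s0: "s0 \<in> U" "c0 s0 \<noteq> 0" by blast
    define c1 where "c1 s = (if s \<in> U then c0 s else 0)" for s
    have c1sum: "(\<Sum>s\<in>UNIV. c1 s * \<pi> x s) = 0" for x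
    proof -
      have "(\<Sum>s\<in>UNIV. c1 s * \<pi> x s) = (\<Sum>s\<in>U. c1 s * \<pi> x s)"
        by (rule sum.mono_neutral_right) (auto simp: c1_def)
      also have "\<dots> = (\<Sum>s\<in>U. c0 s * \<pi> x s)" by (rule sum.cong) (auto simp: c1_def)
      also have "\<dots> = (\<Sum>s\<in>U. c0 s *\<^sub>R w s) $ x" by (simp add: sum_component w_def)
      also have "\<dots> = 0" using c0 by simp
      finally show ?thesis .
    qed
    define c where "c s = (if c1 s0 < 0 then c1 s else - c1 s)" for s
    have csum: "(\<Sum>s\<in>UNIV. c s * \<pi> x s) = 0" for x
      using c1sum[of x] by (cases "c1 s0 < 0") (simp_all add: c_def sum_negf)
    have cneg: "c s0 < 0" using s0 by (auto simp: c_def c1_def)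
    have cU: "c s \<noteq> 0 \<Longrightarrow> s \<in> U" for s by (auto simp: c_def c1_def split: if_splits)
    define D where "D = vbarD vD bD p0 (\<lambda>x s. c s * \<pi> x s)"
    \<comment> \<open>first: the directional derivative D vanishes\<close>
    define e where "e = 1 / (1 + (\<Sum>s\<in>UNIV. \<bar>c s\<bar>))"
    have sabs: "\<bar>c s\<bar> \<le> (\<Sum>s\<in>UNIV. \<bar>c s\<bar>)" for s
      by (rule member_le_sum) auto
    have spos: "0 \<le> (\<Sum>s\<in>UNIV. \<bar>c s\<bar>)" by (simp add: sum_nonneg)
    have "0 < 1 + (\<Sum>s\<in>UNIV. \<bar>c s\<bar>)" using spos by linarith
    hence epos: "0 < e" unfolding e_def by simp
    have ebound: "e * \<bar>c s\<bar> \<le> 1" for s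
    proof -
      have "e * \<bar>c s\<bar> = \<bar>c s\<bar> / (1 + (\<Sum>s\<in>UNIV. \<bar>c s\<bar>))" unfolding e_def by simp
      also have "\<dots> \<le> 1" using sabs[of s] spos by (simp add: divide_le_eq)
      finally show ?thesis .
    qed
    have pert_opt: "vbarD vD bD p0 (\<lambda>x s. (1 + t * c s) * \<pi> x s) = vbarD vD bD p0 \<pi> + t * D"
      and pert_cr: "(\<And>s. 0 \<le> 1 + t * c s) \<Longrightarrow> credible vU p0 (\<lambda>x s. (1 + t * c s) * \<pi> x s)" for t
    proof -
      show "vbarD vD bD p0 (\<lambda>x s. (1 + t * c s) * \<pi> x s) = vbarD vD bD p0 \<pi> + t * D"
        unfolding D_def by (rule vbarD_pert)
      assume h: "\<And>s. 0 \<le> 1 + t * c s"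
      have "(\<Sum>s\<in>UNIV. (t * c s) * \<pi> x s) = 0" for x
        using csum[of x] by (simp add: sum_distrib_left[symmetric] mult.assoc)
      then show "credible vU p0 (\<lambda>x s. (1 + t * c s) * \<pi> x s)"
        using credible_pert[of vU p0 \<pi> "\<lambda>s. t * c s"] cr h by simp
    qed
    have up: "vbarD vD bD p0 \<pi> + t * D \<le> vbarD vD bD p0 \<pi>" if "\<And>s. 0 \<le> 1 + t * c s" for t
    proof -
      have "credible vU p0 (\<lambda>x s. (1 + t * c s) * \<pi> x s)" by (rule pert_cr[OF that])
      hence "vbarD vD bD p0 (\<lambda>x s. (1 + t * c s) * \<pi> x s) \<le> vbarD vD bD p0 \<pi>"
        using opt unfolding optimal_def by blast
      thus ?thesis using pert_opt[of t] by linarith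
    qed
    have "0 \<le> 1 + e * c s" for s
      using ebound[of s] epos mult_pos_neg[of e "c s"] mult_pos_pos[of e "c s"] by (auto simp: abs_if split: if_splits)
    hence d1: "e * D \<le> 0" using up[of e] by simp
    have "0 \<le> 1 + (- e) * c s" for s
      using ebound[of s] epos mult_pos_neg[of e "c s"] mult_pos_pos[of e "c s"] by (auto simp: abs_if split: if_splits)
    hence d2: "- e * D \<le> 0" using up[of "- e"] by simp
    have "D \<le> 0" using d1 epos by (simp add: mult_le_0_iff)
    moreover have "0 \<le> D" using d2 epos by (simp add: mult_le_0_iff zero_le_mult_iff)
    ultimately have D0: "D = 0" by simp
    \<comment> \<open>second: move until one signal drops out\<close>
    have "Min (range c) \<in> range c" by (intro Min_in) auto
    then obtain s1 where s1: "c s1 = Min (range c)" by (metis imageE)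
    have s1min: "c s1 \<le> c s" for s unfolding s1 by (simp add: Min_le)
    have s1neg: "c s1 < 0" using s1min[of s0] cneg by simp
    define t where "t = - 1 / c s1"
    have tnn: "0 \<le> 1 + t * c s" for s
    proof (cases "c s < 0")
      case True
      have "c s / c s1 \<le> 1" using s1min[of s] s1neg by (simp add: divide_le_eq)
      thus ?thesis unfolding t_def by simp
    next
      case False
      have "0 \<le> t" unfolding t_def using s1neg by simp
      with False show ?thesis by simp
    qed
    have t1: "1 + t * c s1 = 0" unfolding t_def using s1neg by simp
    define \<pi>' where "\<pi>' = (\<lambda>x s. (1 + t * c s) * \<pi> x s)"
    have "credible vU p0 \<pi>'" unfolding \<pi>'_def by (rule pert_cr) (rule tnn)
    moreover have "vbarD vD bD p0 \<pi>' = vbarD vD bD p0 \<pi>" unfolding \<pi>'_def pert_opt D0 by simp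
    ultimately have opt': "optimal vD vU bD p0 \<pi>'" using opt unfolding optimal_def by simp
    have "supp \<pi>' \<subseteq> U - {s1}"
      unfolding supp_def \<pi>'_def U_def using t1 by auto
    moreover have "s1 \<in> U" using cU[of s1] s1neg by simp
    ultimately have "card (supp \<pi>') < card U"
    proof -
      assume a1: "supp \<pi>' \<subseteq> U - {s1}" and a2: "s1 \<in> U"
      have "card (supp \<pi>') \<le> card (U - {s1})" using a1 by (intro card_mono) auto
      also have "\<dots> < card U" using a2 by (intro card_Diff1_less) auto
      finally show ?thesis .
    qed
    with mini[OF opt'] show False unfolding U_def by simp
  qed
  have "card {s. \<pi> x s = 0} \<ge> card (UNIV :: ('th \<Rightarrow> 'a) set) - card (UNIV :: 'x set)" for x
  proof -
    have "{s. \<pi> x s = 0} = UNIV - {s. \<pi> x s \<noteq> 0}" by auto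
    hence "card {s. \<pi> x s = 0} = card (UNIV :: ('th \<Rightarrow> 'a) set) - card {s. \<pi> x s \<noteq> 0}"
      by (simp add: card_Diff_subset)
    moreover have "card {s. \<pi> x s \<noteq> 0} \<le> card (supp \<pi>)"
      by (rule card_mono) (auto simp: supp_def)
    ultimately show ?thesis using bound by linarith
  qed
  with opt show ?thesis by blast
qed

theorem proposition5:
  fixes vD vU :: "'x::finite \<Rightarrow> 'th::finite \<Rightarrow> 'a::finite \<Rightarrow> real"
    and bD :: "'x \<Rightarrow> 'th \<Rightarrow> real"
    and p0 :: "'x \<Rightarrow> real"
  assumes "\<And>x. is_dist (bD x)"
    and "is_dist p0"
  shows "((\<exists>!\<pi>. optimal vD vU bD p0 \<pi>) \<or> infinite {\<pi>. optimal vD vU bD p0 \<pi>})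
         \<and> (\<forall>\<pi>. optimal vD vU bD p0 \<pi> \<longrightarrow> vbarD vD bD p0 \<pi> = VD vD vU bD p0)
         \<and> (\<exists>\<pi>. optimal vD vU bD p0 \<pi> \<and>
              (\<forall>x. card {s. \<pi> x s = 0} \<ge> card (UNIV :: ('th \<Rightarrow> 'a) set) - card (UNIV :: 'x set)))"
proof (intro conjI allI impI)
  show "(\<exists>!\<pi>. optimal vD vU bD p0 \<pi>) \<or> infinite {\<pi>. optimal vD vU bD p0 \<pi>}"
    by (rule optimal_unique_or_infinite)
  show "vbarD vD bD p0 \<pi> = VD vD vU bD p0" if "optimal vD vU bD p0 \<pi>" for \<pi>
    using that by (rule optimal_value)
  show "\<exists>\<pi>. optimal vD vU bD p0 \<pi> \<and>
              (\<forall>x. card {s. \<pi> x s = 0} \<ge> card (UNIV :: ('th \<Rightarrow> 'a) set) - card (UNIV :: 'x set))"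
    by (rule sparse_optimal)
qed

end
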